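(* In the standing setup, if $g=B^{\rm T}f_0$ is associated to $f_0$ via $B=\alpha I+\beta A+\gamma A^2$ with $B^2=I$, then $\det(I-\varepsilon g'(x))=\det(I-\varepsilon f_0'(x))$ for all $x\in\mathbb R^6$ and all $\varepsilon\in\mathbb R$.
   Context: Standing setup: $J=\begin{pmatrix}0&I_3\\-I_3&0\end{pmatrix}$ ($6\times6$). $A$ is a fixed real $6\times 6$ skew-Hamiltonian matrix, i.e. $A^{\rm T}J=JA$. $H_0$ is a homogeneous cubic polynomial on $\mathbb R^6$ with $A\nabla^2H_0(x)=\nabla^2H_0(x)A^{\rm T}$ for all $x$ ($\nabla^2$ = Hesse matrix), and $H_1,H_2$ are homogeneous cubic polynomials with $\nabla H_1=A\nabla H_0$, $\nabla H_2=A\nabla H_1$. Set $f_i=J\nabla H_i$; primes denote Jacobi matrices. Associated vector field: if $B=\alpha I+\beta A+\gamma A^2$ satisfies $B^2=I$, then $g(x)=B^{\rm T}f_0(x)$ is called associated to $f_0$. *)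

theory Defs
  imports "HOL-Analysis.Analysis" "HOL-Library.Numeral_Type"
begin

text \<open>The symplectic matrix J = [[0, I3], [-I3, 0]] on R^6 (indices 0..5).\<close>
definition Jmat :: "real^6^6" where
  "Jmat = (\<chi> i j. if i < 3 \<and> j = i + 3 then 1
                 else if j < 3 \<and> i = j + 3 then -1 else 0)"

definition hom_cubic :: "(real^6 \<Rightarrow> real) \<Rightarrow> bool" where
  "hom_cubic H \<longleftrightarrow> (\<exists>c :: 6 \<Rightarrow> 6 \<Rightarrow> 6 \<Rightarrow> real.
      \<forall>x. H x = (\<Sum>i\<in>UNIV. \<Sum>j\<in>UNIV. \<Sum>k\<in>UNIV. c i j k * x$i * x$j * x$k))"

definition grad :: "(real^6 \<Rightarrow> real) \<Rightarrow> real^6 \<Rightarrow> real^6" where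
  "grad H x = (\<chi> i. frechet_derivative H (at x) (axis i 1))"

definition jacobi :: "(real^6 \<Rightarrow> real^6) \<Rightarrow> real^6 \<Rightarrow> real^6^6" where
  "jacobi f x = matrix (frechet_derivative f (at x))"

definition hesse :: "(real^6 \<Rightarrow> real) \<Rightarrow> real^6 \<Rightarrow> real^6^6" where
  "hesse H x = jacobi (grad H) x"

end

theory Submission
  imports Defs
begin


lemma mm_add_r: "((A::real^'n^'m) + B) ** (C::real^'p^'n) = A ** C + B ** C"
  by (simp add: matrix_matrix_mult_def vec_eq_iff sum.distrib algebra_simps)
lemma mm_diff_l: "(A::real^'n^'m) ** (B - (C::real^'p^'n)) = A ** B - A ** C"
  by (simp add: matrix_matrix_mult_def vec_eq_iff sum_subtractf algebra_simps)
lemma mm_diff_r: "((A::real^'n^'m) - B) ** (C::real^'p^'n) = A ** C - B ** C"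
  by (simp add: matrix_matrix_mult_def vec_eq_iff sum_subtractf algebra_simps)
lemma mm_neg_l: "(- (A::real^'n^'m)) ** (B::real^'p^'n) = - (A ** B)"
  by (simp add: matrix_matrix_mult_def vec_eq_iff sum_negf)
lemma mm_neg_r: "(A::real^'n^'m) ** (- (B::real^'p^'n)) = - (A ** B)"
  by (simp add: matrix_matrix_mult_def vec_eq_iff sum_negf)
lemma mm_scale_l: "(k *\<^sub>R (A::real^'n^'m)) ** (B::real^'p^'n) = k *\<^sub>R (A ** B)"
  by (simp add: scalar_matrix_assoc)
lemma mm_scale_r: "(A::real^'n^'m) ** (k *\<^sub>R (B::real^'p^'n)) = k *\<^sub>R (A ** B)"
  by (simp add: matrix_scalar_ac scalar_matrix_assoc)
lemma tr_add: "transpose ((A::real^'n^'m) + B) = transpose A + transpose B"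
  by (simp add: transpose_def vec_eq_iff)
lemma tr_diff: "transpose ((A::real^'n^'m) - B) = transpose A - transpose B"
  by (simp add: transpose_def vec_eq_iff)
lemma tr_neg: "transpose (- (A::real^'n^'m)) = - transpose A"
  by (simp add: transpose_def vec_eq_iff)

lemmas mmsimps = matrix_add_ldistrib mm_add_r mm_diff_l mm_diff_r mm_neg_l mm_neg_r
  mm_scale_l mm_scale_r matrix_mul_assoc tr_add tr_diff tr_neg transpose_scalar matrix_transpose_mul

lemma evenE:
  fixes J S R :: "real^'n^'n"
  assumes JJ: "J ** J = - mat 1" and JT: "transpose J = - J" and ST: "transpose S = S"
    and RJ: "R ** J = J ** transpose R" and MR: "J ** S ** R = R ** (J ** S)"
  shows "det (mat 1 - J ** S ** R) = det (mat 1 + J ** S ** R)"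
proof -
  have "det (mat 1 - J ** S ** R) = det (transpose (mat 1 - J ** S ** R))" by simp
  also have "transpose (mat 1 - J ** S ** R) = mat 1 + transpose R ** S ** J"
    by (simp add: mmsimps ST JT)
  also have "det (mat 1 + transpose R ** S ** J) = det (J ** (mat 1 + transpose R ** S ** J) ** (- J))"
  proof -
    have "det J * det (- J) = 1"
      by (metis JJ det_I det_mul mm_neg_r mm_neg_l minus_minus)
    then show ?thesis by (simp add: det_mul)
  qed
  also have "J ** (mat 1 + transpose R ** S ** J) ** (- J) = mat 1 + R ** (J ** S)"
  proof -
    have "J ** (mat 1 + transpose R ** S ** J) ** (- J) = - (J ** J) - J ** transpose R ** S ** (J ** J)"
      by (simp add: mmsimps)
    also have "\<dots> = mat 1 + J ** transpose R ** S"
      by (simp add: JJ mmsimps)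
    also have "J ** transpose R = R ** J" using RJ by simp
    finally show ?thesis by (simp add: matrix_mul_assoc)
  qed
  also have "R ** (J ** S) = J ** S ** R" using MR by simp
  finally show ?thesis .
qed

lemma core:
  fixes J S C :: "real^'n^'n"
  assumes JJ: "J ** J = - mat 1" and JT: "transpose J = - J" and ST: "transpose S = S"
    and CJ: "C ** J = J ** transpose C" and MC: "J ** S ** C = C ** (J ** S)"
    and CC: "C ** C = mat 1"
  shows "det (mat 1 - e *\<^sub>R (C ** J ** S)) = det (mat 1 - e *\<^sub>R (J ** S))"
proof -
  define M where "M = J ** S"
  define P where "P = mat 1 + C"
  define Q where "Q = mat 1 - C"
  have MP: "M ** P = P ** M" unfolding P_def M_def using MC by (simp add: mmsimps)
  have MQ: "M ** Q = Q ** M" unfolding Q_def M_def using MC by (simp add: mmsimps)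
  have PQ: "P ** Q = 0" unfolding P_def Q_def using CC by (simp add: mmsimps)
  have MPMQ: "M ** P ** (M ** Q) = 0"
  proof -
    have "M ** P ** (M ** Q) = M ** (P ** M) ** Q" by (simp add: matrix_mul_assoc)
    also have "\<dots> = M ** M ** (P ** Q)" by (simp add: MP[symmetric] matrix_mul_assoc)
    finally show ?thesis by (simp add: PQ)
  qed
  have fac: "(mat 1 - s *\<^sub>R (M ** P)) ** (mat 1 - t *\<^sub>R (M ** Q))
     = mat 1 - (s *\<^sub>R (M ** P) + t *\<^sub>R (M ** Q))" for s t
  proof -
    have "(mat 1 - s *\<^sub>R (M ** P)) ** (mat 1 - t *\<^sub>R (M ** Q))
       = mat 1 - s *\<^sub>R (M ** P) - t *\<^sub>R (M ** Q) + (s * t) *\<^sub>R (M ** P ** (M ** Q))"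
      by (simp add: mmsimps algebra_simps)
    then show ?thesis by (simp add: MPMQ algebra_simps)
  qed
  have beven: "det (mat 1 - t *\<^sub>R (M ** Q)) = det (mat 1 - (-t) *\<^sub>R (M ** Q))" for t
  proof -
    have "det (mat 1 - J ** S ** (t *\<^sub>R Q)) = det (mat 1 + J ** S ** (t *\<^sub>R Q))"
    proof (rule evenE[OF JJ JT ST])
      show "t *\<^sub>R Q ** J = J ** transpose (t *\<^sub>R Q)"
        unfolding Q_def using CJ by (simp add: mmsimps)
      show "J ** S ** (t *\<^sub>R Q) = t *\<^sub>R Q ** (J ** S)"
        using MQ unfolding M_def by (simp add: mmsimps)
    qed
    then show ?thesis unfolding M_def by (simp add: mmsimps)
  qed
  have "C ** J ** S = M ** C" using MC unfolding M_def by (simp add: matrix_mul_assoc)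
  also have "M ** C = (1/2) *\<^sub>R (M ** P) + (-1/2) *\<^sub>R (M ** Q)"
    unfolding P_def Q_def by (simp add: mmsimps scaleR_add_right scaleR_diff_right)
  finally have L: "e *\<^sub>R (C ** J ** S) = (e/2) *\<^sub>R (M ** P) + (-e/2) *\<^sub>R (M ** Q)"
    by (simp add: scaleR_diff_right)
  have R: "e *\<^sub>R (J ** S) = (e/2) *\<^sub>R (M ** P) + (e/2) *\<^sub>R (M ** Q)"
  proof -
    have "(e/2) *\<^sub>R (M ** P) + (e/2) *\<^sub>R (M ** Q) = (e/2) *\<^sub>R (M + M ** C) + (e/2) *\<^sub>R (M - M ** C)"
      unfolding P_def Q_def by (simp add: mmsimps)
    also have "\<dots> = (e/2) *\<^sub>R M + (e/2) *\<^sub>R M"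
      by (simp only: scaleR_add_right scaleR_diff_right) simp
    also have "\<dots> = (e/2 + e/2) *\<^sub>R M" by (simp only: scaleR_add_left)
    finally show ?thesis unfolding M_def by simp
  qed
  show ?thesis
    unfolding L R fac[symmetric] det_mul using beven[of "e/2"] by simp
qed
lemma lt6: "(0::6) < 3" "(1::6) < 3" "(2::6) < 3" "\<not> (3::6) < 3" "\<not> (4::6) < 3" "\<not> (5::6) < 3"
  by (simp_all add: less_bit0_def bit0.Rep_numeral bit0.Rep_0 bit0.Rep_1)
lemma exhaust_6:
  fixes x :: 6
  shows "x = 0 \<or> x = 1 \<or> x = 2 \<or> x = 3 \<or> x = 4 \<or> x = 5"
proof (induct x)
  case (of_int z)
  then have "z = 0 \<or> z = 1 \<or> z = 2 \<or> z = 3 \<or> z = 4 \<or> z = 5" by fastforce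
  then show ?case by auto
qed
lemma UNIV_6: "UNIV = {0,1,2,3,4,5::6}"
  using exhaust_6 by auto
lemma sum_6: "sum f (UNIV::6 set) = f 0 + f 1 + f 2 + f 3 + f 4 + f 5"
  unfolding UNIV_6 by (simp add: ac_simps)
lemma JJ: "Jmat ** Jmat = - mat 1"
  unfolding vec_eq_iff matrix_matrix_mult_def Jmat_def mat_def
  apply (intro allI)
  subgoal for i j using exhaust_6[of i] exhaust_6[of j] by (elim disjE) (simp_all add: sum_6 lt6)
  done
lemma JT: "transpose Jmat = - Jmat"
  unfolding vec_eq_iff transpose_def Jmat_def
  apply (intro allI)
  subgoal for i j using exhaust_6[of i] exhaust_6[of j] by (elim disjE) (simp_all add: lt6)
  done
lemma hd_nth: "((\<lambda>x::real^'n. x$i) has_derivative (\<lambda>h. h$i)) F"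
  by (rule bounded_linear.has_derivative[OF bounded_linear_vec_nth has_derivative_ident])

definition D3 :: "(6 \<Rightarrow> 6 \<Rightarrow> 6 \<Rightarrow> real) \<Rightarrow> real^6 \<Rightarrow> real^6 \<Rightarrow> real" where
  "D3 c x h = (\<Sum>i\<in>UNIV. \<Sum>j\<in>UNIV. \<Sum>k\<in>UNIV. c i j k * (h$i * x$j * x$k + x$i * h$j * x$k + x$i * x$j * h$k))"

definition G3 :: "(6 \<Rightarrow> 6 \<Rightarrow> 6 \<Rightarrow> real) \<Rightarrow> real^6 \<Rightarrow> real^6 \<Rightarrow> real^6" where
  "G3 c x h = (\<chi> l. \<Sum>i\<in>UNIV. \<Sum>j\<in>UNIV. \<Sum>k\<in>UNIV. c i j k *
     ((axis l 1::real^6)$i * (h$j * x$k + x$j * h$k) + (axis l 1::real^6)$j * (h$i * x$k + x$i * h$k)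
      + (axis l 1::real^6)$k * (h$i * x$j + x$i * h$j)))"

lemma cubic_deriv:
  "((\<lambda>x::real^6. \<Sum>i\<in>UNIV. \<Sum>j\<in>UNIV. \<Sum>k\<in>UNIV. c i j k * x$i * x$j * x$k) has_derivative D3 c x) (at x)"
  unfolding D3_def
  apply (rule derivative_eq_intros hd_nth refl)+
  apply (simp add: algebra_simps)
  done

lemma grad_cubic:
  assumes "H = (\<lambda>x::real^6. \<Sum>i\<in>UNIV. \<Sum>j\<in>UNIV. \<Sum>k\<in>UNIV. c i j k * x$i * x$j * x$k)"
  shows "grad H = (\<lambda>y. \<chi> l. D3 c y (axis l 1))"
  unfolding grad_def assms using frechet_derivative_at[OF cubic_deriv] by metis

lemma grad_cubic_deriv:
  "((\<lambda>y. \<chi> l. D3 c y (axis l 1)) has_derivative G3 c x) (at x)"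
proof -
  have "((\<lambda>y. D3 c y (axis l 1)) has_derivative (\<lambda>h. G3 c x h $ l)) (at x)" for l
    unfolding D3_def G3_def
    apply simp
    apply (rule derivative_eq_intros hd_nth refl)+
    apply (simp add: algebra_simps)
    done
  then show ?thesis
    apply (subst has_derivative_componentwise_within)
    apply (auto simp: Basis_vec_def inner_axis)
    done
qed

lemma hesse_cubic:
  assumes "H = (\<lambda>x::real^6. \<Sum>i\<in>UNIV. \<Sum>j\<in>UNIV. \<Sum>k\<in>UNIV. c i j k * x$i * x$j * x$k)"
  shows "hesse H x = matrix (G3 c x)"
  unfolding hesse_def jacobi_def grad_cubic[OF assms]
  using frechet_derivative_at[OF grad_cubic_deriv] by metis

lemma G3_sym: "transpose (matrix (G3 c x)) = matrix (G3 c x)"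
  unfolding transpose_def matrix_def vec_eq_iff G3_def
  apply (simp)
  apply (intro allI sum.cong refl)
  apply (simp add: algebra_simps)
  done


lemma jac_lin:
  assumes "(F has_derivative F') (at x)"
  shows "jacobi (\<lambda>y. K *v F y) x = K ** matrix F'"
proof -
  have d: "((\<lambda>y. K *v F y) has_derivative (\<lambda>h. K *v F' h)) (at x)"
    by (rule bounded_linear.has_derivative[OF matrix_vector_mul_bounded_linear assms])
  have "jacobi (\<lambda>y. K *v F y) x = matrix (\<lambda>h. K *v F' h)"
    unfolding jacobi_def using frechet_derivative_at[OF d] by metis
  also have "(\<lambda>h. K *v F' h) = (\<lambda>h. K *v h) \<circ> F'" by (simp add: o_def)
  also have "matrix ((\<lambda>h. K *v h) \<circ> F') = matrix (\<lambda>h. K *v h) ** matrix F'"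
    by (rule matrix_compose[OF has_derivative_linear[OF assms] matrix_vector_mul_linear])
  finally show ?thesis by simp
qed

theorem mainTheorem5:
  fixes A B :: "real^6^6" and H0 H1 H2 :: "real^6 \<Rightarrow> real"
    and \<alpha> \<beta> \<gamma> :: real
  assumes skewHam: "transpose A ** Jmat = Jmat ** A"
    and H0_cubic: "hom_cubic H0"
    and H0_comm: "\<And>x. A ** hesse H0 x = hesse H0 x ** transpose A"
    and H1_cubic: "hom_cubic H1"
    and H2_cubic: "hom_cubic H2"
    and H1_grad: "\<And>x. grad H1 x = A *v grad H0 x"
    and H2_grad: "\<And>x. grad H2 x = A *v grad H1 x"
    and B_def: "B = \<alpha> *\<^sub>R mat 1 + \<beta> *\<^sub>R A + \<gamma> *\<^sub>R (A ** A)"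
    and B_inv: "B ** B = mat 1"
  shows "\<forall>x \<epsilon>. det (mat 1 - \<epsilon> *\<^sub>R jacobi (\<lambda>y. transpose B *v (Jmat *v grad H0 y)) x)
             = det (mat 1 - \<epsilon> *\<^sub>R jacobi (\<lambda>y. Jmat *v grad H0 y) x)"
proof (intro allI)
  fix x :: "real^6" and e :: real
  obtain c where c: "\<forall>x. H0 x = (\<Sum>i\<in>UNIV. \<Sum>j\<in>UNIV. \<Sum>k\<in>UNIV. c i j k * x$i * x$j * x$k)"
    using H0_cubic unfolding hom_cubic_def by blast
  have H0eq: "H0 = (\<lambda>x::real^6. \<Sum>i\<in>UNIV. \<Sum>j\<in>UNIV. \<Sum>k\<in>UNIV. c i j k * x$i * x$j * x$k)"
    using c by auto
  define C where "C = transpose B"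
  define J where "J = Jmat"
  define S where "S = hesse H0 x"
  have S_eq: "S = matrix (G3 c x)" unfolding S_def by (rule hesse_cubic[OF H0eq])
  have gr: "grad H0 = (\<lambda>y. \<chi> l. D3 c y (axis l 1))" by (rule grad_cubic[OF H0eq])
  have jg: "jacobi (\<lambda>y. transpose B *v (Jmat *v grad H0 y)) x = C ** J ** S"
  proof -
    have "(\<lambda>y. transpose B *v (Jmat *v grad H0 y)) = (\<lambda>y. (C ** J) *v (\<chi> l. D3 c y (axis l 1)))"
      by (simp add: gr C_def J_def matrix_vector_mul_assoc)
    then show ?thesis using jac_lin[OF grad_cubic_deriv] S_eq by simp
  qed
  have jf: "jacobi (\<lambda>y. Jmat *v grad H0 y) x = J ** S"
    using jac_lin[OF grad_cubic_deriv] S_eq by (simp add: gr J_def)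
  have ST: "transpose S = S" unfolding S_eq by (rule G3_sym)
  have skew: "transpose A ** J = J ** A" using skewHam J_def by simp
  have AAJ: "transpose A ** transpose A ** J = J ** A ** A"
    by (metis matrix_mul_assoc skew)
  have CJ: "C ** J = J ** transpose C"
    unfolding C_def B_def by (simp add: mmsimps skew AAJ)
  have AS: "A ** S = S ** transpose A" using H0_comm S_def by simp
  have AAS: "A ** A ** S = S ** transpose A ** transpose A"
    by (metis matrix_mul_assoc AS)
  have BS: "B ** S = S ** transpose B"
    unfolding B_def by (simp add: mmsimps AS AAS)
  have MC: "J ** S ** C = C ** (J ** S)"
  proof -
    have "J ** S ** C = J ** (B ** S)" by (simp add: C_def BS matrix_mul_assoc)
    also have "\<dots> = (J ** transpose C) ** S" by (simp add: C_def matrix_mul_assoc)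
    also have "\<dots> = C ** (J ** S)" by (simp add: CJ[symmetric] matrix_mul_assoc)
    finally show ?thesis .
  qed
  have CC: "C ** C = mat 1"
    unfolding C_def by (metis B_inv matrix_transpose_mul transpose_mat)
  have JJ': "J ** J = - mat 1" unfolding J_def by (rule JJ)
  have JT': "transpose J = - J" unfolding J_def by (rule JT)
  show "det (mat 1 - e *\<^sub>R jacobi (\<lambda>y. transpose B *v (Jmat *v grad H0 y)) x)
             = det (mat 1 - e *\<^sub>R jacobi (\<lambda>y. Jmat *v grad H0 y) x)"
    unfolding jg jf by (rule core[OF JJ' JT' ST CJ MC CC])
qed

end
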